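(* Assume the setting and hypotheses of Theorem 1 (regular pure-feedback subsystems, lower-triangular coupling $\Delta$). Let $\mathcal{X}$ be the open neighborhood of the operating point on which the joint system is flat with flat output $\mathbf{y}=(\mathbf{y}^1,\dots,\mathbf{y}^N)$, where $\mathbf{y}^i=\mathbf{x}^i_1$. Suppose that for each $i$ smooth maps $h^i_k$, $k=1,\dots,r$, are given such that for all $(\mathbf{x},\mathbf{u})\in\mathcal{X}$: $$h^i_k\big(\mathbf{x}^i_1,\dots,\mathbf{x}^i_k,\bar f^i_k(\mathbf{x}^i_1,\dots,\mathbf{x}^i_{k+1})\big)=\mathbf{x}^i_{k+1}\quad (k=1,\dots,r-1),$$ $$h^i_r\big(\mathbf{x}^i_1,\dots,\mathbf{x}^i_r,\bar f^i_r(\mathbf{x}^i_1,\dots,\mathbf{x}^i_r,\mathbf{u}^i)\big)=\mathbf{u}^i.$$ Define maps recursively for $i=1,\dots,N$ by $\Phi^i_1(\mathbf{y})=\mathbf{y}^i$. For $k=2,\dots,r+1$, set $$\Phi^i_k(\mathbf{y},\dots,\mathbf{y}^{(k-1)})=h^i_{k-1}\Big(\Phi^i_1,\dots,\Phi^i_{k-1},\; D\Phi^i_{k-1}\,[\dot{\mathbf{y}};\dots;\mathbf{y}^{(k-1)}]-\Delta^i_{k-1}\big(\Phi_1,\dots,\Phi_{k-1},\Phi^1_k,\dots,\Phi^{i-1}_k\big)\Big).$$ Here $\Phi_s=(\Phi^1_s,\dots,\Phi^N_s)$. The term $D\Phi^i_{k-1}[\dot{\mathbf{y}};\dots;\mathbf{y}^{(k-1)}]$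 is the full Jacobian of $\Phi^i_{k-1}$ with respect to its arguments $(\mathbf{y},\dots,\mathbf{y}^{(k-2)})$, applied to $(\dot{\mathbf{y}},\dots,\mathbf{y}^{(k-1)})$; that is, it is the total time derivative of $\Phi^i_{k-1}$. The recursion is well defined when carried out in increasing order of $(k-1)N+i$, and the second argument of $\Delta^i_{k-1}$ is the substitution $\mathbf{x}_{\le k-1}\mapsto(\Phi_1,\dots,\Phi_{k-1})$, $\mathbf{x}^{<i}_k\mapsto(\Phi^1_k,\dots,\Phi^{i-1}_k)$ in the lower-triangular form $\bar\Delta^i_{k-1}$. Then each $\Phi^i_k$ is smooth. Moreover, along any trajectory of the coupled joint dynamics $\dot{\mathbf{x}}=\bar f(\mathbf{x},\mathbf{u})+\Delta(\mathbf{x})$ that stays in $\mathcal{X}$, we have, for all $i=1,\dots,N$ and $k=1,\dots,r$, $$\mathbf{x}^i_k=\Phi^i_k(\mathbf{y},\dots,\mathbf{y}^{(k-1)}),\qquad \mathbf{u}^i=\Phi^i_{r+1}(\mathbf{y},\dots,\mathbf{y}^{(r)}).$$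
   Context: Setup. There are $N$ subsystems. Subsystem $i$ has input $\mathbf{u}^i\in\mathbb{R}^{m_i}$ and state $\mathbf{x}^i=(\mathbf{x}^i_1,\dots,\mathbf{x}^i_r)\in\mathbb{R}^{rm_i}$ with $\mathbf{x}^i_j\in\mathbb{R}^{m_i}$. The joint state is $\mathbf{x}=(\mathbf{x}^1,\dots,\mathbf{x}^N)$ and the joint input is $\mathbf{u}=(\mathbf{u}^1,\dots,\mathbf{u}^N)$. Write $\mathbf{x}_j=(\mathbf{x}^1_j,\dots,\mathbf{x}^N_j)$, $\mathbf{x}_{\le j}=(\mathbf{x}_1,\dots,\mathbf{x}_j)$, and $\mathbf{x}^{<i}_{j+1}=(\mathbf{x}^1_{j+1},\dots,\mathbf{x}^{i-1}_{j+1})$. Coupled dynamics: $\dot{\mathbf{x}}^i_j=\bar f^i_j(\mathbf{x}^i_1,\dots,\mathbf{x}^i_{j+1})+\Delta^i_j(\mathbf{x})$ for $j<r$, and $\dot{\mathbf{x}}^i_r=\bar f^i_r(\mathbf{x}^i_1,\dots,\mathbf{x}^i_r,\mathbf{u}^i)+\Delta^i_r(\mathbf{x})$. Regularity. Each $\bar f^i_j$ is smooth near the operating point $(\mathbf{x}^*,\mathbf{u}^* )$, and at that point $\det D_{\mathbf{x}^i_{j+1}}\bar f^i_j\ne0$ for $j<r$ and $\det D_{\mathbf{u}^i}\bar f^i_r\ne0$. Lower-triangular coupling on $\mathcal{X}$. Each $\Delta^i_j$ is smooth and $\Delta^i_j(\mathbf{x})=\bar\Delta^i_j(\mathbf{x}_{\le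 j},\mathbf{x}^{<i}_{j+1})$ on $\mathcal{X}$. *)

theory Defs
  imports "HOL-Analysis.Analysis"
begin

text \<open>One layer x_j = (x^1_j,...,x^N_j) of the joint state is a vector in real^'d,
  where the finite index type 'd enumerates the coordinates of all subsystems and
  sub d in {1..N} tells to which subsystem coordinate d belongs (so m_i = card {d. sub d = i}).
  The joint state x = (x_1,...,x_r) is a vector in real^'d^'l, where the finite type 'l
  enumerates the layers via a bijection lay onto {1..r}.  The output tower
  (y, y', ..., y^(r)) is a vector in real^'d^'t, with ord a bijection of 't onto {0..r}.
  A vector "in R^{m_i}" is represented as a vector of real^'d supported on block i.\<close>

fun Ck :: "nat \<Rightarrow> 'a::euclidean_space set \<Rightarrow> ('a \<Rightarrow> 'b::real_normed_vector) \<Rightarrow> bool" where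
  "Ck 0 S f = continuous_on S f"
| "Ck (Suc n) S f = ((\<forall>x\<in>S. f differentiable (at x)) \<and>
      (\<forall>v. Ck n S (\<lambda>x. frechet_derivative f (at x) v)))"

definition smooth_on :: "'a::euclidean_space set \<Rightarrow> ('a \<Rightarrow> 'b::real_normed_vector) \<Rightarrow> bool" where
  "smooth_on S f = (\<forall>n. Ck n S f)"

definition blk :: "('d::finite \<Rightarrow> nat) \<Rightarrow> nat \<Rightarrow> real^'d \<Rightarrow> real^'d" where
  "blk sub i v = (\<chi> d. if sub d = i then v $ d else 0)"

definition layer :: "('l::finite \<Rightarrow> nat) \<Rightarrow> nat \<Rightarrow> 'l" where
  "layer lay k = the_inv lay k"

text \<open>bmask i k x represents (x^i_1,...,x^i_k).\<close>
definition bmask :: "('d::finite \<Rightarrow> nat) \<Rightarrow> ('l::finite \<Rightarrow> nat) \<Rightarrow> nat \<Rightarrow> nat \<Rightarrow> real^'d^'l \<Rightarrow> real^'d^'l" where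
  "bmask sub lay i k x = (\<chi> l d. if sub d = i \<and> lay l \<le> k then x $ l $ d else 0)"

text \<open>lowtri i j x represents (x_{<=j}, x^{<i}_{j+1}).\<close>
definition lowtri :: "('d::finite \<Rightarrow> nat) \<Rightarrow> ('l::finite \<Rightarrow> nat) \<Rightarrow> nat \<Rightarrow> nat \<Rightarrow> real^'d^'l \<Rightarrow> real^'d^'l" where
  "lowtri sub lay i j x = (\<chi> l d. if lay l \<le> j \<or> (lay l = Suc j \<and> sub d < i) then x $ l $ d else 0)"

definition Fj :: "('d::finite \<Rightarrow> nat) \<Rightarrow> ('l::finite \<Rightarrow> nat) \<Rightarrow> nat
    \<Rightarrow> (nat \<Rightarrow> nat \<Rightarrow> real^'d^'l \<Rightarrow> real^'d) \<Rightarrow> (nat \<Rightarrow> (real^'d^'l) \<times> (real^'d) \<Rightarrow> real^'d)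
    \<Rightarrow> real^'d^'l \<Rightarrow> real^'d \<Rightarrow> real^'d^'l" where
  "Fj sub lay r fb fr x u = (\<chi> l d.
     (if lay l < r then fb (lay l) (sub d) (bmask sub lay (sub d) (Suc (lay l)) x)
      else fr (sub d) (bmask sub lay (sub d) r x, blk sub (sub d) u)) $ d)"

definition stackPhi :: "('d::finite \<Rightarrow> nat) \<Rightarrow> ('l::finite \<Rightarrow> nat) \<Rightarrow> (nat \<Rightarrow> nat \<Rightarrow> 'y \<Rightarrow> real^'d) \<Rightarrow> 'y \<Rightarrow> real^'d^'l" where
  "stackPhi sub lay Phi Y = (\<chi> l d. Phi (lay l) (sub d) Y $ d)"

text \<open>(y,...,y^(r)) |-> (y',...,y^(r),0): the direction of the total time derivative.\<close>
definition tshift :: "('t::finite \<Rightarrow> nat) \<Rightarrow> nat \<Rightarrow> real^'d^'t \<Rightarrow> real^'d^'t" where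
  "tshift ord r Y = (\<chi> s. if ord s < r then Y $ the_inv ord (Suc (ord s)) else 0)"

definition tower :: "('t::finite \<Rightarrow> nat) \<Rightarrow> (nat \<Rightarrow> real \<Rightarrow> real^'d) \<Rightarrow> real \<Rightarrow> real^'d^'t" where
  "tower ord Ys t = (\<chi> s. Ys (ord s) t)"

definition det_on :: "'d set \<Rightarrow> ('d \<Rightarrow> 'd \<Rightarrow> real) \<Rightarrow> real" where
  "det_on B J = (\<Sum>p | p permutes B. of_int (sign p) * (\<Prod>d\<in>B. J d (p d)))"

end

theory Submission
  imports Defs
begin

lemma Ck_mono: "Ck (Suc n) S f \<Longrightarrow> Ck n S f"
proof (induction n arbitrary: f)
  case 0
  then show ?case
    by (auto intro!: continuous_at_imp_continuous_on differentiable_imp_continuous_within)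
next
  case (Suc n)
  then show ?case by (metis Ck.simps(2))
qed

lemma Ck_subset: "Ck n S f \<Longrightarrow> T \<subseteq> S \<Longrightarrow> Ck n T f"
  by (induction n arbitrary: f) (auto intro: continuous_on_subset)

lemma Ck_cong: "open S \<Longrightarrow> Ck n S f \<Longrightarrow> (\<And>x. x\<in>S \<Longrightarrow> f x = g x) \<Longrightarrow> Ck n S g"
proof (induction n arbitrary: f g)
  case 0
  then show ?case using continuous_on_cong by auto
next
  case (Suc n)
  have d: "\<forall>x\<in>S. g differentiable (at x)"
  proof
    fix x assume "x\<in>S"
    then obtain D where "(f has_derivative D) (at x)" using Suc.prems by (auto simp: differentiable_def)
    then have "(g has_derivative D) (at x)"
      using Suc.prems \<open>x\<in>S\<close> by (intro has_derivative_transform_within_open[of f D x UNIV S g]) auto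
    then show "g differentiable at x" by (auto simp: differentiable_def)
  qed
  have e: "frechet_derivative f (at x) = frechet_derivative g (at x)" if "x\<in>S" for x
  proof (rule frechet_derivative_transform_within_open[of f x S g])
    show "f differentiable at x" using Suc.prems(2) that by simp
  qed (use Suc.prems that in auto)
  have "Ck n S (\<lambda>x. frechet_derivative g (at x) v)" for v
  proof (rule Suc.IH[of "\<lambda>x. frechet_derivative f (at x) v"])
    show "Ck n S (\<lambda>x. frechet_derivative f (at x) v)" using Suc.prems(2) by simp
  qed (use Suc.prems e in auto)
  then show ?case using d by simp
qed

lemma Ck_const: "Ck n S (\<lambda>x. c)"
proof (induction n arbitrary: c)
  case 0
  then show ?case by simp
next
  case (Suc n)
  have "Ck n S (\<lambda>x. frechet_derivative (\<lambda>x. c) (at x) v)" for v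
    using Suc.IH[of 0] by (simp only: frechet_derivative_const)
  then show ?case by simp
qed

lemma Ck_add: "open S \<Longrightarrow> Ck n S f \<Longrightarrow> Ck n S g \<Longrightarrow> Ck n S (\<lambda>x. f x + g x)"
proof (induction n arbitrary: f g)
  case 0
  then show ?case by (auto intro: continuous_on_add)
next
  case (Suc n)
  have df: "f differentiable at x" "g differentiable at x" if "x\<in>S" for x
    using Suc.prems that by simp_all
  have e: "frechet_derivative (\<lambda>x. f x + g x) (at x) v = frechet_derivative f (at x) v + frechet_derivative g (at x) v"
    if "x\<in>S" for x v
  proof -
    have "((\<lambda>x. f x + g x) has_derivative (\<lambda>v. frechet_derivative f (at x) v + frechet_derivative g (at x) v)) (at x)"
      using df[OF that] by (intro has_derivative_add) (simp_all add: frechet_derivative_works[symmetric])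
    from frechet_derivative_at[OF this, symmetric] show ?thesis by simp
  qed
  have "Ck n S (\<lambda>x. frechet_derivative (\<lambda>x. f x + g x) (at x) v)" for v
  proof (rule Ck_cong[OF \<open>open S\<close> Suc.IH[of "\<lambda>x. frechet_derivative f (at x) v" "\<lambda>x. frechet_derivative g (at x) v"]])
    show "Ck n S (\<lambda>x. frechet_derivative f (at x) v)" using Suc.prems(2) by simp
    show "Ck n S (\<lambda>x. frechet_derivative g (at x) v)" using Suc.prems(3) by simp
  qed (use Suc.prems e in auto)
  moreover have "\<forall>x\<in>S. (\<lambda>x. f x + g x) differentiable at x" using df by auto
  ultimately show ?case by simp
qed

lemma Ck_linear_comp: "open S \<Longrightarrow> bounded_linear L \<Longrightarrow> Ck n S f \<Longrightarrow> Ck n S (\<lambda>x. L (f x))"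
proof (induction n arbitrary: f)
  case 0
  then show ?case by (auto intro: continuous_on_compose2[OF linear_continuous_on] )
next
  case (Suc n)
  have df: "f differentiable at x" if "x\<in>S" for x
    using Suc.prems that by simp_all
  have e: "frechet_derivative (\<lambda>x. L (f x)) (at x) v = L (frechet_derivative f (at x) v)"
    if "x\<in>S" for x v
  proof -
    have "((\<lambda>x. L (f x)) has_derivative (\<lambda>v. L (frechet_derivative f (at x) v))) (at x)"
      using df[OF that] by (intro bounded_linear.has_derivative[OF Suc.prems(2)]) (simp add: frechet_derivative_works[symmetric])
    from frechet_derivative_at[OF this, symmetric] show ?thesis by simp
  qed
  have "Ck n S (\<lambda>x. frechet_derivative (\<lambda>x. L (f x)) (at x) v)" for v
  proof (rule Ck_cong[OF \<open>open S\<close> Suc.IH[of "\<lambda>x. frechet_derivative f (at x) v"]])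
    show "Ck n S (\<lambda>x. frechet_derivative f (at x) v)" using Suc.prems(3) by simp
  qed (use Suc.prems e in auto)
  moreover have "\<forall>x\<in>S. (\<lambda>x. L (f x)) differentiable at x"
    using df differentiable_chain_at[of f _ L] bounded_linear_imp_differentiable[OF Suc.prems(2)] by (auto simp: o_def)
  ultimately show ?case by simp
qed

lemma Ck_scaleR: "open S \<Longrightarrow> Ck n S a \<Longrightarrow> Ck n S w \<Longrightarrow> Ck n S (\<lambda>x. a x *\<^sub>R w x)"
proof (induction n arbitrary: a w)
  case 0
  then show ?case by (auto intro: continuous_on_scaleR)
next
  case (Suc n)
  have df: "a differentiable at x" "w differentiable at x" if "x\<in>S" for x
    using Suc.prems that by simp_all
  have e: "frechet_derivative (\<lambda>x. a x *\<^sub>R w x) (at x) v = a x *\<^sub>R frechet_derivative w (at x) v + frechet_derivative a (at x) v *\<^sub>R w x"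
    if "x\<in>S" for x v
  proof -
    have "((\<lambda>x. a x *\<^sub>R w x) has_derivative (\<lambda>v. a x *\<^sub>R frechet_derivative w (at x) v + frechet_derivative a (at x) v *\<^sub>R w x)) (at x)"
      using df[OF that] by (intro has_derivative_scaleR) (simp_all add: frechet_derivative_works[symmetric])
    from frechet_derivative_at[OF this, symmetric] show ?thesis by simp
  qed
  have "Ck n S (\<lambda>x. frechet_derivative (\<lambda>x. a x *\<^sub>R w x) (at x) v)" for v
  proof (rule Ck_cong[OF \<open>open S\<close>])
    show "Ck n S (\<lambda>x. a x *\<^sub>R frechet_derivative w (at x) v + frechet_derivative a (at x) v *\<^sub>R w x)"
    proof (rule Ck_add[OF \<open>open S\<close>])
      show "Ck n S (\<lambda>x. a x *\<^sub>R frechet_derivative w (at x) v)"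
        using Suc.IH[OF \<open>open S\<close> Ck_mono[OF Suc.prems(2)]] Suc.prems(3) by simp
      show "Ck n S (\<lambda>x. frechet_derivative a (at x) v *\<^sub>R w x)"
        using Suc.IH[OF \<open>open S\<close> _ Ck_mono[OF Suc.prems(3)]] Suc.prems(2) by simp
    qed
  qed (use e in auto)
  moreover have "\<forall>x\<in>S. (\<lambda>x. a x *\<^sub>R w x) differentiable at x"
    using df by (auto intro: differentiable_scaleR)
  ultimately show ?case by simp
qed

lemma Ck_sum: assumes "open S" "finite I" "(\<And>i. i\<in>I \<Longrightarrow> Ck n S (f i))" shows "Ck n S (\<lambda>x. \<Sum>i\<in>I. f i x)"
  using assms(2,3)
proof (induction I rule: finite_induct)
  case empty
  then show ?case by (simp add: Ck_const)
next
  case (insert a F)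
  have "Ck n S (\<lambda>x. f a x + (\<Sum>i\<in>F. f i x))"
    using insert by (intro Ck_add[OF assms(1)]) auto
  then show ?case using insert by simp
qed

lemma linear_expand: "linear L \<Longrightarrow> L u = (\<Sum>b\<in>Basis. (u \<bullet> b) *\<^sub>R L b)"
proof -
  assume l: "linear L"
  have "L u = L (\<Sum>b\<in>Basis. (u \<bullet> b) *\<^sub>R b)" by (simp only: euclidean_representation)
  also have "\<dots> = (\<Sum>b\<in>Basis. (u \<bullet> b) *\<^sub>R L b)" using l by (simp add: linear_sum linear_scale)
  finally show ?thesis .
qed

lemma Ck_compose: "open S \<Longrightarrow> open T \<Longrightarrow> f ` S \<subseteq> T \<Longrightarrow> Ck n T g \<Longrightarrow> Ck n S f \<Longrightarrow> Ck n S (\<lambda>x. g (f x))"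
proof (induction n arbitrary: f g)
  case 0
  then show ?case by (auto intro: continuous_on_compose2)
next
  case (Suc n)
  have dg: "g differentiable at (f x)" if "x\<in>S" for x
  proof -
    have "f x \<in> T" using Suc.prems(3) that by blast
    then show ?thesis using Suc.prems(4) by simp
  qed
  have df: "f differentiable at x" if "x\<in>S" for x using Suc.prems(5) that by simp
  have e: "frechet_derivative (\<lambda>x. g (f x)) (at x) v = (\<Sum>b\<in>Basis. (frechet_derivative f (at x) v \<bullet> b) *\<^sub>R frechet_derivative g (at (f x)) b)"
    if "x\<in>S" for x v
  proof -
    have "frechet_derivative (\<lambda>x. g (f x)) (at x) v = frechet_derivative g (at (f x)) (frechet_derivative f (at x) v)"
      using frechet_derivative_compose[OF df[OF that] dg[OF that]] by (simp add: o_def)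
    also have "\<dots> = (\<Sum>b\<in>Basis. (frechet_derivative f (at x) v \<bullet> b) *\<^sub>R frechet_derivative g (at (f x)) b)"
    proof (rule linear_expand)
      show "linear (frechet_derivative g (at (f x)))"
        using dg[OF that] frechet_derivative_works has_derivative_linear by blast
    qed
    finally show ?thesis .
  qed
  have "Ck n S (\<lambda>x. frechet_derivative (\<lambda>x. g (f x)) (at x) v)" for v
  proof -
    have "Ck n S (\<lambda>x. \<Sum>b\<in>Basis. (frechet_derivative f (at x) v \<bullet> b) *\<^sub>R frechet_derivative g (at (f x)) b)"
    proof (rule Ck_sum[OF \<open>open S\<close> finite_Basis])
      fix b :: 'b assume "b \<in> Basis"
      have 1: "Ck n S (\<lambda>x. frechet_derivative f (at x) v \<bullet> b)"
      proof (rule Ck_linear_comp[OF \<open>open S\<close> bounded_linear_inner_left])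
        show "Ck n S (\<lambda>x. frechet_derivative f (at x) v)" using Suc.prems(5) by simp
      qed
      have 2: "Ck n S (\<lambda>x. frechet_derivative g (at (f x)) b)"
      proof (rule Suc.IH[of f "\<lambda>y. frechet_derivative g (at y) b", OF \<open>open S\<close> \<open>open T\<close> \<open>f ` S \<subseteq> T\<close>])
        show "Ck n T (\<lambda>y. frechet_derivative g (at y) b)" using Suc.prems(4) by simp
        show "Ck n S f" using Ck_mono[OF Suc.prems(5)] .
      qed
      show "Ck n S (\<lambda>x. (frechet_derivative f (at x) v \<bullet> b) *\<^sub>R frechet_derivative g (at (f x)) b)"
        by (rule Ck_scaleR[OF \<open>open S\<close> 1 2])
    qed
    then show ?thesis
      by (rule Ck_cong[OF \<open>open S\<close>]) (rule e[symmetric])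
  qed
  moreover have "\<forall>x\<in>S. (\<lambda>x. g (f x)) differentiable at x"
    using differentiable_chain_at[OF df dg] by (simp add: o_def)
  ultimately show ?case by simp
qed

lemma Ck_blin: assumes L: "bounded_linear L" shows "Ck n S L"
proof (cases n)
  case 0
  then show ?thesis using L by (simp add: linear_continuous_on)
next
  case (Suc m)
  have e: "frechet_derivative L (at x) = L" for x
    using L bounded_linear_imp_has_derivative frechet_derivative_at by metis
  have "\<forall>x\<in>S. L differentiable at x" using L bounded_linear_imp_differentiable by blast
  moreover have "Ck m S (\<lambda>x. frechet_derivative L (at x) v)" for v
    unfolding e by (rule Ck_const)
  ultimately show ?thesis using Suc by simp
qed

lemma Ck_components: assumes S: "open S" and c: "\<And>b. b\<in>Basis \<Longrightarrow> Ck n S (\<lambda>x. f x \<bullet> b)"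
  shows "Ck n S f"
proof -
  have "Ck n S (\<lambda>x. \<Sum>b\<in>Basis. (f x \<bullet> b) *\<^sub>R b)"
  proof (rule Ck_sum[OF S finite_Basis])
    fix b :: 'b assume "b \<in> Basis"
    show "Ck n S (\<lambda>x. (f x \<bullet> b) *\<^sub>R b)"
      by (rule Ck_scaleR[OF S c[OF \<open>b \<in> Basis\<close>] Ck_const])
  qed
  then show ?thesis by (simp only: euclidean_representation)
qed

lemma Ck_deriv_apply: "open S \<Longrightarrow> Ck (Suc n) S f \<Longrightarrow> Ck n S w \<Longrightarrow> Ck n S (\<lambda>x. frechet_derivative f (at x) (w x))"
proof -
  assume S: "open S" and f: "Ck (Suc n) S f" and w: "Ck n S w"
  have e: "frechet_derivative f (at x) (w x) = (\<Sum>b\<in>Basis. (w x \<bullet> b) *\<^sub>R frechet_derivative f (at x) b)"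
    if "x\<in>S" for x
  proof (rule linear_expand)
    have "f differentiable at x" using f that by simp
    then show "linear (frechet_derivative f (at x))"
      using frechet_derivative_works has_derivative_linear by blast
  qed
  have "Ck n S (\<lambda>x. \<Sum>b\<in>Basis. (w x \<bullet> b) *\<^sub>R frechet_derivative f (at x) b)"
  proof (rule Ck_sum[OF S finite_Basis])
    fix b :: 'a assume "b \<in> Basis"
    have 1: "Ck n S (\<lambda>x. w x \<bullet> b)"
      by (rule Ck_linear_comp[OF S bounded_linear_inner_left w])
    have 2: "Ck n S (\<lambda>x. frechet_derivative f (at x) b)"
      using f by simp
    show "Ck n S (\<lambda>x. (w x \<bullet> b) *\<^sub>R frechet_derivative f (at x) b)"
      by (rule Ck_scaleR[OF S 1 2])
  qed
  then show ?thesis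
    by (rule Ck_cong[OF S]) (rule e[symmetric])
qed

lemma sm_subset: "smooth_on S f \<Longrightarrow> T \<subseteq> S \<Longrightarrow> smooth_on T f"
  unfolding smooth_on_def using Ck_subset by blast
lemma sm_cong: "open S \<Longrightarrow> smooth_on S f \<Longrightarrow> (\<And>x. x\<in>S \<Longrightarrow> f x = g x) \<Longrightarrow> smooth_on S g"
  unfolding smooth_on_def using Ck_cong by blast
lemma sm_const: "smooth_on S (\<lambda>x. c)"
  unfolding smooth_on_def using Ck_const by blast
lemma sm_add: "open S \<Longrightarrow> smooth_on S f \<Longrightarrow> smooth_on S g \<Longrightarrow> smooth_on S (\<lambda>x. f x + g x)"
  unfolding smooth_on_def using Ck_add by blast
lemma sm_linear_comp: "open S \<Longrightarrow> bounded_linear L \<Longrightarrow> smooth_on S f \<Longrightarrow> smooth_on S (\<lambda>x. L (f x))"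
  unfolding smooth_on_def using Ck_linear_comp by blast
lemma sm_compose: "open S \<Longrightarrow> open T \<Longrightarrow> f ` S \<subseteq> T \<Longrightarrow> smooth_on T g \<Longrightarrow> smooth_on S f \<Longrightarrow> smooth_on S (\<lambda>x. g (f x))"
  unfolding smooth_on_def using Ck_compose by blast
lemma sm_blin: "bounded_linear L \<Longrightarrow> smooth_on S L"
  unfolding smooth_on_def using Ck_blin by blast
lemma sm_components: "open S \<Longrightarrow> (\<And>b. b\<in>Basis \<Longrightarrow> smooth_on S (\<lambda>x. f x \<bullet> b)) \<Longrightarrow> smooth_on S f"
  unfolding smooth_on_def using Ck_components by blast
lemma sm_deriv_apply: "open S \<Longrightarrow> smooth_on S f \<Longrightarrow> smooth_on S w \<Longrightarrow> smooth_on S (\<lambda>x. frechet_derivative f (at x) (w x))"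
  unfolding smooth_on_def using Ck_deriv_apply by blast
lemma sm_diff: "open S \<Longrightarrow> smooth_on S f \<Longrightarrow> smooth_on S g \<Longrightarrow> smooth_on S (\<lambda>x. f x - g x)"
proof -
  assume S: "open S" and f: "smooth_on S f" and g: "smooth_on S g"
  have "smooth_on S (\<lambda>x. - g x)" by (rule sm_linear_comp[OF S bounded_linear_minus[OF bounded_linear_ident] g])
  from sm_add[OF S f this] show ?thesis by simp
qed
lemma sm_pair: "open S \<Longrightarrow> smooth_on S f \<Longrightarrow> smooth_on S g \<Longrightarrow> smooth_on S (\<lambda>x. (f x, g x))"
proof -
  assume S: "open S" and f: "smooth_on S f" and g: "smooth_on S g"
  have 1: "smooth_on S (\<lambda>x. (f x, 0))"
    by (rule sm_linear_comp[OF S bounded_linear_Pair[OF bounded_linear_ident bounded_linear_zero] f])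
  have 2: "smooth_on S (\<lambda>x. (0, g x))"
    by (rule sm_linear_comp[OF S bounded_linear_Pair[OF bounded_linear_zero bounded_linear_ident] g])
  from sm_add[OF S 1 2] show ?thesis by simp
qed
lemma sm_diffble: "smooth_on S f \<Longrightarrow> x \<in> S \<Longrightarrow> f differentiable at x"
  unfolding smooth_on_def by (metis Ck.simps(2))
lemma sm_cont: "smooth_on S f \<Longrightarrow> continuous_on S f"
  unfolding smooth_on_def by (metis Ck.simps(1))

lemma sm_cart2: fixes F :: "'a::euclidean_space \<Rightarrow> real^'d^'l"
  assumes S: "open S" and c: "\<And>l d. smooth_on S (\<lambda>x. F x $ l $ d)"
  shows "smooth_on S F"
proof (rule sm_components[OF S])
  fix b :: "real^'d^'l" assume "b \<in> Basis"
  then obtain l u where u: "u \<in> (Basis :: (real^'d) set)" and b: "b = axis l u" unfolding Basis_vec_def by auto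
  then obtain d where "u = axis d 1" unfolding Basis_vec_def by auto
  then have "F x \<bullet> b = F x $ l $ d" for x by (simp add: b inner_axis)
  then show "smooth_on S (\<lambda>x. F x \<bullet> b)" using c by simp
qed

lemma sm_cart1: fixes F :: "'a::euclidean_space \<Rightarrow> real^'d"
  assumes S: "open S" and c: "\<And>d. smooth_on S (\<lambda>x. F x $ d)"
  shows "smooth_on S F"
proof (rule sm_components[OF S])
  fix b :: "real^'d" assume "b \<in> Basis"
  then obtain d where b: "b = axis d 1" unfolding Basis_vec_def by auto
  then have "F x \<bullet> b = F x $ d" for x by (simp add: b inner_axis)
  then show "smooth_on S (\<lambda>x. F x \<bullet> b)" using c by simp
qed

lemma blk_nth: "blk sub i v $ d = (if sub d = i then v $ d else 0)"
  by (simp add: blk_def)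
lemma blk_add: "blk sub i (a + b) = blk sub i a + blk sub i b"
  by (simp add: vec_eq_iff blk_nth)
lemma blk_diff: "blk sub i (a - b) = blk sub i a - blk sub i b"
  by (simp add: vec_eq_iff blk_nth)
lemma blk_blk: "blk sub i (blk sub i a) = blk sub i a"
  by (simp add: vec_eq_iff blk_nth)
lemma blk_linear: "bounded_linear (blk sub i)"
proof -
  have "linear (blk sub i)" by (rule linearI) (simp_all add: vec_eq_iff blk_nth)
  then show ?thesis by (simp add: linear_conv_bounded_linear)
qed
lemma axis_linear: "bounded_linear (axis s :: real^'d \<Rightarrow> real^'d^'n)"
proof -
  have "linear (axis s :: real^'d \<Rightarrow> real^'d^'n)"
    by (rule linearI) (simp_all add: vec_eq_iff axis_def)
  then show ?thesis by (simp add: linear_conv_bounded_linear)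
qed
lemma vec_sum_axis: "(\<chi> s. F s) = (\<Sum>s\<in>UNIV. axis s (F s) :: 'a::real_normed_vector^'n)"
  by (simp add: vec_eq_iff sum_component axis_def)

lemma ord_inv: "bij_betw ord UNIV {0..r::nat} \<Longrightarrow> (j::nat) \<le> r \<Longrightarrow> ord (the_inv ord j) = j"
  by (rule f_the_inv_into_f_bij_betw) auto
lemma lay_layer: "bij_betw lay UNIV {1..r} \<Longrightarrow> 1 \<le> k \<Longrightarrow> k \<le> r \<Longrightarrow> lay (layer lay k) = k"
  unfolding layer_def by (rule f_the_inv_into_f_bij_betw) auto
lemma layer_lay: "bij_betw lay UNIV {1..r} \<Longrightarrow> layer lay (lay l) = l"
  unfolding layer_def by (rule the_inv_f_f) (simp add: bij_betw_def)

lemma deriv_inv1: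
  fixes f :: "real^'d^'t \<Rightarrow> 'b::real_normed_vector"
  assumes U: "open U" and diff: "\<And>Y. Y\<in>U \<Longrightarrow> f differentiable at Y"
    and inv: "\<And>Y Y'. Y\<in>U \<Longrightarrow> (\<forall>s. P s \<longrightarrow> Y$s = Y'$s) \<Longrightarrow> Y' \<in> U \<and> f Y' = f Y"
    and Y: "Y\<in>U" and agree: "\<forall>s. P s \<longrightarrow> Y$s = Y'$s"
  shows "frechet_derivative f (at Y') = frechet_derivative f (at Y)"
proof -
  define c where "c = Y' - Y"
  have Y': "Y' \<in> U" using inv[OF Y agree] by simp
  define D' where "D' = frechet_derivative f (at Y')"
  have fd: "(f has_derivative D') (at Y')" unfolding D'_def using diff[OF Y'] unfolding frechet_derivative_works .
  have t: "((\<lambda>Z. Z + c) has_derivative (\<lambda>h. h)) (at Y)"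
    by (auto intro!: derivative_eq_intros)
  have "Y + c = Y'" by (simp add: c_def)
  then have h1: "((\<lambda>Z. f (Z + c)) has_derivative (\<lambda>h. D' h)) (at Y)"
    using has_derivative_compose[OF t, of f D'] fd by simp
  have h2: "f (Z + c) = f Z" if "Z \<in> U" for Z
  proof -
    have "\<forall>s. P s \<longrightarrow> Z$s = (Z + c)$s" using agree by (simp add: c_def)
    from inv[OF that this] show ?thesis by simp
  qed
  have "(f has_derivative (\<lambda>h. D' h)) (at Y)"
    by (rule has_derivative_transform_within_open[OF h1 U Y h2])
  then have "D' = frechet_derivative f (at Y)" by (rule frechet_derivative_at)
  then show ?thesis unfolding D'_def .
qed

lemma deriv_inv2:
  fixes f :: "real^'d^'t \<Rightarrow> 'b::real_normed_vector"
  assumes diff: "f differentiable at Y"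
    and inv: "\<And>Y'. (\<forall>s. P s \<longrightarrow> Y$s = Y'$s) \<Longrightarrow> f Y' = f Y"
    and agree: "\<forall>s. P s \<longrightarrow> v$s = v'$s"
  shows "frechet_derivative f (at Y) v = frechet_derivative f (at Y) v'"
proof -
  define w where "w = v - v'"
  define D where "D = frechet_derivative f (at Y)"
  have fd: "(f has_derivative D) (at Y)" unfolding D_def using diff unfolding frechet_derivative_works .
  have t: "((\<lambda>t::real. Y + t *\<^sub>R w) has_derivative (\<lambda>t. t *\<^sub>R w)) (at 0)"
    by (auto intro!: derivative_eq_intros)
  have 1: "((\<lambda>t::real. f (Y + t *\<^sub>R w)) has_derivative (\<lambda>t. D (t *\<^sub>R w))) (at 0)"
    using has_derivative_compose[OF t, of f D] fd by simp
  have "f (Y + t *\<^sub>R w) = f Y" for t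
    by (rule inv) (use agree in \<open>simp add: w_def\<close>)
  then have 2: "((\<lambda>t::real. f (Y + t *\<^sub>R w)) has_derivative (\<lambda>t. 0)) (at 0)"
    by simp
  have "D (1 *\<^sub>R w) = 0" using fun_cong[OF has_derivative_unique[OF 1 2], of 1] by simp
  moreover have "linear D" using fd has_derivative_linear by blast
  ultimately show ?thesis unfolding D_def[symmetric] w_def by (simp add: linear_diff)
qed

lemma traj_deriv:
  fixes g :: "real^'d^'t \<Rightarrow> real^'d" and Ys :: "nat \<Rightarrow> real \<Rightarrow> real^'d" and q :: "real \<Rightarrow> real^'d"
  assumes ord: "bij_betw ord UNIV {0..r}"
    and T: "open T" and t: "t \<in> T"
    and gdiff: "g differentiable at (tower ord Ys t)"
    and cyl: "\<And>t' Y'. t' \<in> T \<Longrightarrow> (\<forall>s. ord s < r \<longrightarrow> tower ord Ys t' $ s = Y' $ s) \<Longrightarrow> g Y' = g (tower ord Ys t')"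
    and gq: "\<And>t'. t'\<in>T \<Longrightarrow> g (tower ord Ys t') = q t'"
    and qd: "(q has_vector_derivative q') (at t)"
    and Yd: "\<forall>s<r. \<forall>t\<in>T. (Ys s has_vector_derivative Ys (Suc s) t) (at t)"
  shows "frechet_derivative g (at (tower ord Ys t)) (tshift ord r (tower ord Ys t)) = q'"
proof -
  define c where "c s t' = (if ord s < r then Ys (ord s) t' else Ys (ord s) t)" for s t'
  define tm where "tm t' = (\<chi> s. c s t')" for t'
  have tmt: "tm t = tower ord Ys t" by (simp add: tm_def c_def tower_def vec_eq_iff)
  have ts: "tshift ord r (tower ord Ys t) = (\<chi> s. if ord s < r then Ys (Suc (ord s)) t else 0)"
  proof -
    have "ord s < r \<Longrightarrow> ord (the_inv ord (Suc (ord s))) = Suc (ord s)" for s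
      using ord_inv[OF ord] by simp
    then show ?thesis by (simp add: tshift_def tower_def vec_eq_iff)
  qed
  have cd: "(c s has_vector_derivative (if ord s < r then Ys (Suc (ord s)) t else 0)) (at t)" for s
  proof (cases "ord s < r")
    case True
    then have "c s = Ys (ord s)" by (simp add: c_def fun_eq_iff)
    then show ?thesis using Yd t True by simp
  next
    case False
    then have "c s = (\<lambda>_. Ys (ord s) t)" by (simp add: c_def fun_eq_iff)
    then show ?thesis using False by simp
  qed
  have "((\<lambda>t'. \<Sum>s\<in>UNIV. axis s (c s t')) has_vector_derivative
        (\<Sum>s\<in>UNIV. axis s (if ord s < r then Ys (Suc (ord s)) t else 0))) (at t)"
    by (intro has_vector_derivative_sum bounded_linear.has_vector_derivative[OF axis_linear] cd)
  then have tmd: "(tm has_vector_derivative tshift ord r (tower ord Ys t)) (at t)"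
    unfolding ts tm_def vec_sum_axis[symmetric] by simp
  have gd0: "(g has_derivative frechet_derivative g (at (tower ord Ys t))) (at (tower ord Ys t))"
    using gdiff unfolding frechet_derivative_works .
  have gd: "(g has_derivative frechet_derivative g (at (tower ord Ys t))) (at (tm t))"
    using gd0 by (simp only: tmt)
  have "((\<lambda>t'. g (tm t')) has_derivative (\<lambda>h. frechet_derivative g (at (tower ord Ys t)) (h *\<^sub>R tshift ord r (tower ord Ys t)))) (at t)"
    using has_derivative_compose[OF tmd[unfolded has_vector_derivative_def] gd] .
  moreover have "g (tm t') = q t'" if "t' \<in> T" for t'
  proof -
    have "\<forall>s. ord s < r \<longrightarrow> tower ord Ys t' $ s = tm t' $ s" by (simp add: tm_def c_def tower_def)
    then show ?thesis using cyl[OF that] gq[OF that] by simp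
  qed
  ultimately have "(q has_derivative (\<lambda>h. frechet_derivative g (at (tower ord Ys t)) (h *\<^sub>R tshift ord r (tower ord Ys t)))) (at t)"
    using has_derivative_transform_within_open[of "\<lambda>t'. g (tm t')" _ t UNIV T q] T t by auto
  from has_derivative_unique[OF this qd[unfolded has_vector_derivative_def]]
  have "(\<lambda>h. frechet_derivative g (at (tower ord Ys t)) (h *\<^sub>R tshift ord r (tower ord Ys t))) 1 = (\<lambda>h. h *\<^sub>R q') 1"
    by (rule arg_cong)
  then show ?thesis by simp
qed

lemma idx_div: assumes "0 < (N::nat)" "1 \<le> i" "i \<le> N" shows "((k-1)*N + (i-1)) div N = k - 1"
proof -
  have e: "(k-1)*N + (i-1) = (i-1) + (k-1)*N" by (rule add.commute)
  have "(i - 1 + (k-1)*N) div N = (k-1) + (i-1) div N"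
    by (rule div_mult_self1) (use assms in linarith)
  moreover have "(i-1) div N = 0" by (rule div_less) (use assms in linarith)
  ultimately show ?thesis unfolding e by linarith
qed
lemma idx_mod: assumes "0 < (N::nat)" "1 \<le> i" "i \<le> N" shows "((k-1)*N + (i-1)) mod N = i - 1"
proof -
  have e: "(k-1)*N + (i-1) = (i-1) + (k-1)*N" by (rule add.commute)
  have "(i - 1 + (k-1)*N) mod N = (i-1) mod N"
    by (rule mod_mult_self1)
  moreover have "(i-1) mod N = i - 1" by (rule mod_less) (use assms in linarith)
  ultimately show ?thesis unfolding e by linarith
qed
lemma idx_decomp: "(n::nat) = (n div N + 1 - 1) * N + (n mod N + 1 - 1)"
proof -
  have "n = n div N * N + n mod N" by (rule div_mult_mod_eq[symmetric])
  then show ?thesis by simp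
qed
lemma idx_lt: assumes "0 < (N::nat)" "i' \<le> N" "1 \<le> i" "1 \<le> i'" "1 \<le> k'" "k' < k \<or> (k' = k \<and> i' < i)"
  shows "(k'-1)*N + (i'-1) < (k-1)*N + (i-1)"
proof (cases "k' < k")
  case True
  then have "k' \<le> k - 1" by simp
  then have "k' * N \<le> (k-1) * N" by (rule mult_le_mono1)
  moreover have "(k'-1)*N + N = k' * N" using assms(5) by (cases k') auto
  ultimately show ?thesis using assms by linarith
next
  case False
  then show ?thesis using assms by auto
qed
lemma cyl_arith: assumes "0 < (N::nat)" "1 \<le> i" "i \<le> N" "1 \<le> k"
  shows "(a * N < (k-1)*N + i) \<longleftrightarrow> a < k"
proof
  assume "a < k"
  then have "a \<le> k - 1" by simp
  then have "a * N \<le> (k-1) * N" by (rule mult_le_mono1)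
  then show "a * N < (k-1)*N + i" using assms by linarith
next
  assume h: "a * N < (k-1)*N + i"
  show "a < k"
  proof (rule ccontr)
    assume "\<not> a < k"
    then have "k \<le> a" by simp
    then have "k * N \<le> a * N" by (rule mult_le_mono1)
    moreover have "(k-1)*N + N = k * N" using assms(4) by (cases k) auto
    ultimately show False using h assms by linarith
  qed
qed
lemma cyl_arith2: "0 < (N::nat) \<Longrightarrow> (a * N < m * N) \<longleftrightarrow> a < m"
  by simp

lemma tshift_linear: "bounded_linear (tshift ord r :: real^'d^'t \<Rightarrow> real^'d^'t)"
proof -
  have "linear (tshift ord r :: real^'d^'t \<Rightarrow> real^'d^'t)"
    by (rule linearI) (simp_all add: vec_eq_iff tshift_def)
  then show ?thesis by (simp add: linear_conv_bounded_linear)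
qed

theorem theorem2:
  fixes N r :: nat
    and sub :: "'d::finite \<Rightarrow> nat" and lay :: "'l::finite \<Rightarrow> nat" and ord :: "'t::finite \<Rightarrow> nat"
    and fb :: "nat \<Rightarrow> nat \<Rightarrow> real^'d^'l \<Rightarrow> real^'d"
    and fr :: "nat \<Rightarrow> (real^'d^'l) \<times> (real^'d) \<Rightarrow> real^'d"
    and \<Delta> :: "real^'d^'l \<Rightarrow> real^'d^'l"
    and Db :: "nat \<Rightarrow> nat \<Rightarrow> real^'d^'l \<Rightarrow> real^'d"
    and h :: "nat \<Rightarrow> nat \<Rightarrow> (real^'d^'l) \<times> (real^'d) \<Rightarrow> real^'d"
    and \<Phi> :: "nat \<Rightarrow> nat \<Rightarrow> real^'d^'t \<Rightarrow> real^'d"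
    and X :: "((real^'d^'l) \<times> (real^'d)) set" and xs :: "real^'d^'l" and us :: "real^'d"
    and FS :: "nat \<Rightarrow> nat \<Rightarrow> (real^'d^'l) set"
    and FR :: "nat \<Rightarrow> ((real^'d^'l) \<times> (real^'d)) set"
    and DS :: "nat \<Rightarrow> nat \<Rightarrow> (real^'d^'l) set"
    and HS :: "nat \<Rightarrow> nat \<Rightarrow> ((real^'d^'l) \<times> (real^'d)) set"
  assumes sub: "\<forall>d. sub d \<in> {1..N}"
    and lay: "bij_betw lay UNIV {1..r}"
    and ord: "bij_betw ord UNIV {0..r}"
    and X_open: "open X" and op_in_X: "(xs, us) \<in> X"
    and fb_smooth: "\<forall>j\<in>{1..<r}. \<forall>i\<in>{1..N}. open (FS j i) \<and>
          bmask sub lay i (Suc j) xs \<in> FS j i \<and> smooth_on (FS j i) (fb j i)"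
    and fr_smooth: "\<forall>i\<in>{1..N}. open (FR i) \<and>
          (bmask sub lay i r xs, blk sub i us) \<in> FR i \<and> smooth_on (FR i) (fr i)"
    and fb_reg: "\<forall>j\<in>{1..<r}. \<forall>i\<in>{1..N}. det_on {d. sub d = i}
          (\<lambda>d d'. frechet_derivative (fb j i) (at (bmask sub lay i (Suc j) xs))
                    (axis (layer lay (Suc j)) (axis d' 1)) $ d) \<noteq> 0"
    and fr_reg: "\<forall>i\<in>{1..N}. det_on {d. sub d = i}
          (\<lambda>d d'. frechet_derivative (fr i) (at (bmask sub lay i r xs, blk sub i us))
                    (0, axis d' 1) $ d) \<noteq> 0"
    and Delta_smooth: "smooth_on (fst ` X) \<Delta>"
    and lower_tri: "\<forall>(x, u)\<in>X. \<forall>i\<in>{1..N}. \<forall>j\<in>{1..r}.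
          blk sub i (\<Delta> x $ layer lay j) = blk sub i (Db j i (lowtri sub lay i j x))"
    and Db_smooth: "\<forall>j\<in>{1..r}. \<forall>i\<in>{1..N}. open (DS j i) \<and>
          (\<forall>(x, u)\<in>X. lowtri sub lay i j x \<in> DS j i) \<and> smooth_on (DS j i) (Db j i)"
    and h_smooth: "\<forall>k\<in>{1..r}. \<forall>i\<in>{1..N}. open (HS k i) \<and> smooth_on (HS k i) (h k i) \<and>
          (\<forall>(x, u)\<in>X. (bmask sub lay i k x,
              blk sub i (if k < r then fb k i (bmask sub lay i (Suc k) x)
                         else fr i (bmask sub lay i r x, blk sub i u))) \<in> HS k i)"
    and h_inv: "\<forall>(x, u)\<in>X. \<forall>i\<in>{1..N}. \<forall>k\<in>{1..<r}.
          blk sub i (h k i (bmask sub lay i k x, blk sub i (fb k i (bmask sub lay i (Suc k) x))))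
            = blk sub i (x $ layer lay (Suc k))"
    and h_inv_r: "\<forall>(x, u)\<in>X. \<forall>i\<in>{1..N}.
          blk sub i (h r i (bmask sub lay i r x, blk sub i (fr i (bmask sub lay i r x, blk sub i u))))
            = blk sub i u"
    and Phi_1: "\<forall>i\<in>{1..N}. \<forall>Y. \<Phi> 1 i Y = blk sub i (Y $ the_inv ord 0)"
    and Phi_rec: "\<forall>k\<in>{2..Suc r}. \<forall>i\<in>{1..N}. \<forall>Y.
          \<Phi> k i Y = blk sub i (h (k - 1) i
             (bmask sub lay i (k - 1) (stackPhi sub lay \<Phi> Y),
              blk sub i (frechet_derivative (\<Phi> (k - 1) i) (at Y) (tshift ord r Y)
                         - Db (k - 1) i (lowtri sub lay i (k - 1) (stackPhi sub lay \<Phi> Y)))))"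
  shows "\<exists>\<Omega>. open \<Omega> \<and> (\<forall>k\<in>{1..Suc r}. \<forall>i\<in>{1..N}. smooth_on \<Omega> (\<Phi> k i)) \<and>
     (\<forall>(T :: real set) (xt :: real \<Rightarrow> real^'d^'l) (ut :: real \<Rightarrow> real^'d) (Ys :: nat \<Rightarrow> real \<Rightarrow> real^'d).
        open T
        \<and> (\<forall>t\<in>T. (xt t, ut t) \<in> X \<and>
              (xt has_vector_derivative (Fj sub lay r fb fr (xt t) (ut t) + \<Delta> (xt t))) (at t))
        \<and> (\<forall>t\<in>T. Ys 0 t = xt t $ layer lay 1)
        \<and> (\<forall>s<r. \<forall>t\<in>T. (Ys s has_vector_derivative Ys (Suc s) t) (at t))
        \<longrightarrow> (\<forall>t\<in>T. tower ord Ys t \<in> \<Omega> \<and>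
              (\<forall>i\<in>{1..N}. (\<forall>k\<in>{1..r}. blk sub i (xt t $ layer lay k) = \<Phi> k i (tower ord Ys t))
                         \<and> blk sub i (ut t) = \<Phi> (Suc r) i (tower ord Ys t))))"
proof -
  have "sub undefined \<in> {1..N}" using sub by blast
  then have N0: "0 < N" by auto
  have subN: "\<And>d. 1 \<le> sub d \<and> sub d \<le> N" using sub by auto
  have layr: "\<And>l. 1 \<le> lay l \<and> lay l \<le> r" using lay bij_betwE by fastforce
  then have r1: "1 \<le> r" by (meson order_trans)
  define A where "A = (\<lambda>k i Y. bmask sub lay i (k - 1) (stackPhi sub lay \<Phi> Y))"
  define B where "B = (\<lambda>k i Y. lowtri sub lay i (k - 1) (stackPhi sub lay \<Phi> Y))"
  define Dp where "Dp = (\<lambda>k i Y. frechet_derivative (\<Phi> (k - 1) i) (at Y) (tshift ord r Y))"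
  define W where "W = (\<lambda>k i Y. blk sub i (Dp k i Y - Db (k - 1) i (B k i Y)))"
  have Phi_eq: "\<Phi> k i Y = blk sub i (h (k - 1) i (A k i Y, W k i Y))"
    if "k \<in> {2..Suc r}" "i \<in> {1..N}" for k i Y
    using Phi_rec that unfolding A_def B_def W_def Dp_def by blast
  have Phi1: "\<Phi> 1 i Y = blk sub i (Y $ the_inv ord 0)" if "i \<in> {1..N}" for i Y
    using Phi_1 that by blast
  have Acomp: "A k i Y $ l $ d = (if sub d = i \<and> lay l \<le> k - 1 then \<Phi> (lay l) (sub d) Y $ d else 0)" for k i Y l d
    by (simp add: A_def bmask_def stackPhi_def)
  have Bcomp: "B k i Y $ l $ d = (if lay l \<le> k - 1 \<or> (lay l = Suc (k - 1) \<and> sub d < i) then \<Phi> (lay l) (sub d) Y $ d else 0)" for k i Y l d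
    by (simp add: B_def lowtri_def stackPhi_def)
  define kk where "kk = (\<lambda>n. n div N + 1)"
  define ii where "ii = (\<lambda>n. n mod N + 1)"
  define C where "C = (\<lambda>n Y. 2 \<le> kk n \<longrightarrow> (B (kk n) (ii n) Y \<in> DS (kk n - 1) (ii n) \<and>
      (A (kk n) (ii n) Y, W (kk n) (ii n) Y) \<in> HS (kk n - 1) (ii n)))"
  define G where "G = (\<lambda>n. {Y. \<forall>m<n. C m Y})"
  define M where "M = Suc r * N"
  have Ganti: "G n \<subseteq> G m" if "m \<le> n" for m n using that by (auto simp: G_def)
  have GSuc: "G (Suc n) = G n \<inter> {Y. C n Y}" for n by (auto simp: G_def less_Suc_eq)
  have G0: "G 0 = UNIV" by (simp add: G_def)
  have kk_pos: "kk ((k-1)*N + (i-1)) = k" if "1 \<le> i" "i \<le> N" "1 \<le> k" for k i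
    using idx_div[OF N0 that(1,2), of k] that(3) by (simp add: kk_def)
  have ii_pos: "ii ((k-1)*N + (i-1)) = i" if "1 \<le> i" "i \<le> N" for k i
    using idx_mod[OF N0 that, of k] that by (simp add: ii_def)
  have pos_kk: "n = (kk n - 1) * N + (ii n - 1)" for n
    using idx_decomp[of n N] by (simp add: kk_def ii_def)
  have kk_range: "1 \<le> kk n \<and> kk n \<le> Suc r" if "n < M" for n
  proof -
    have "n div N < Suc r" using that N0 by (simp add: M_def div_less_iff_less_mult)
    then show ?thesis by (simp add: kk_def)
  qed
  have ii_range: "1 \<le> ii n \<and> ii n \<le> N" for n
    using mod_less_divisor[OF N0, of n] by (simp add: ii_def)
  have tshift_agree: "\<forall>s. ord s < K - 1 \<longrightarrow> tshift ord r Y' $ s = tshift ord r Y $ s"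
    if "\<forall>s. ord s < K \<longrightarrow> Y $ s = Y' $ s" for K Y Y'
  proof (intro allI impI)
    fix s assume s: "ord s < K - 1"
    show "tshift ord r Y' $ s = tshift ord r Y $ s"
    proof (cases "ord s < r")
      case True
      then have "ord (the_inv ord (Suc (ord s))) = Suc (ord s)" using ord_inv[OF ord] by simp
      then show ?thesis using True s that by (simp add: tshift_def)
    next
      case False
      then show ?thesis by (simp add: tshift_def)
    qed
  qed
  have Dsuppl: "\<And>k. 2 \<le> k \<Longrightarrow> k \<le> Suc r \<Longrightarrow> k - 1 \<in> {1..r} \<and> Suc (k - 1) = k" by auto
  have SM: "(\<forall>n'\<le>n. open (G n')) \<and>
     (\<forall>n'\<le>n. \<forall>Y\<in>G n'. \<forall>Y'. (\<forall>s. ord s * N < n' \<longrightarrow> Y$s = Y'$s) \<longrightarrow> Y' \<in> G n') \<and>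
     (\<forall>m<n. smooth_on (G (Suc m)) (\<Phi> (kk m) (ii m))) \<and>
     (\<forall>m<n. \<forall>Y\<in>G (Suc m). \<forall>Y'. (\<forall>s. ord s < kk m \<longrightarrow> Y$s = Y'$s) \<longrightarrow> \<Phi> (kk m) (ii m) Y' = \<Phi> (kk m) (ii m) Y)"
    if "n \<le> M" for n
    using that
  proof (induction n)
    case 0
    then show ?case by (simp add: G0)
  next
    case (Suc n)
    have nM: "n < M" using Suc.prems by simp
    note IH = Suc.IH[OF less_imp_le[OF nM]]
    have IHa': "\<forall>n'\<le>n. open (G n')" using IH by (rule conjunct1)
    have IHb': "\<forall>n'\<le>n. \<forall>Y\<in>G n'. \<forall>Y'. (\<forall>s. ord s * N < n' \<longrightarrow> Y$s = Y'$s) \<longrightarrow> Y' \<in> G n'"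
      using IH[THEN conjunct2] by (rule conjunct1)
    have IHc': "\<forall>m<n. smooth_on (G (Suc m)) (\<Phi> (kk m) (ii m))"
      using IH[THEN conjunct2, THEN conjunct2] by (rule conjunct1)
    have IHd': "\<forall>m<n. \<forall>Y\<in>G (Suc m). \<forall>Y'. (\<forall>s. ord s < kk m \<longrightarrow> Y$s = Y'$s) \<longrightarrow> \<Phi> (kk m) (ii m) Y' = \<Phi> (kk m) (ii m) Y"
      using IH[THEN conjunct2, THEN conjunct2] by (rule conjunct2)
    have IHa: "\<And>n'. n' \<le> n \<Longrightarrow> open (G n')" using IHa' by blast
    have IHb: "\<And>n' Y Y'. n' \<le> n \<Longrightarrow> Y\<in>G n' \<Longrightarrow> (\<forall>s. ord s * N < n' \<longrightarrow> Y$s = Y'$s) \<Longrightarrow> Y' \<in> G n'"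
      using IHb' by blast
    have IHc: "\<And>m. m < n \<Longrightarrow> smooth_on (G (Suc m)) (\<Phi> (kk m) (ii m))" using IHc' by blast
    have IHd: "\<And>m Y Y'. m < n \<Longrightarrow> Y\<in>G (Suc m) \<Longrightarrow> (\<forall>s. ord s < kk m \<longrightarrow> Y$s = Y'$s) \<Longrightarrow> \<Phi> (kk m) (ii m) Y' = \<Phi> (kk m) (ii m) Y"
      using IHd' by blast
    define k where "k = kk n"
    define i where "i = ii n"
    have kr: "1 \<le> k" "k \<le> Suc r" using kk_range[OF nM] by (auto simp: k_def)
    have ir: "1 \<le> i" "i \<le> N" using ii_range by (auto simp: i_def)
    have npos: "n = (k-1)*N + (i-1)" using pos_kk[of n] by (simp add: k_def i_def)
    have before: "(k'-1)*N + (i'-1) < n \<and> kk ((k'-1)*N + (i'-1)) = k' \<and> ii ((k'-1)*N + (i'-1)) = i'"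
      if "1 \<le> k'" "1 \<le> i'" "i' \<le> N" "k' < k \<or> (k' = k \<and> i' < i)" for k' i'
      using idx_lt[OF N0 that(3) ir(1) that(2) that(1) that(4)] npos kk_pos[OF that(2,3,1)] ii_pos[OF that(2,3)] by simp
    have bsm: "smooth_on (G n) (\<Phi> k' i')"
      if "1 \<le> k'" "1 \<le> i'" "i' \<le> N" "k' < k \<or> (k' = k \<and> i' < i)" for k' i'
    proof -
      note b = before[OF that]
      have "smooth_on (G (Suc ((k'-1)*N + (i'-1)))) (\<Phi> (kk ((k'-1)*N + (i'-1))) (ii ((k'-1)*N + (i'-1))))"
        using b[THEN conjunct1] by (rule IHc)
      then have "smooth_on (G (Suc ((k'-1)*N + (i'-1)))) (\<Phi> k' i')" using b by simp
      moreover have "Suc ((k'-1)*N + (i'-1)) \<le> n" using b[THEN conjunct1] by (rule Suc_leI)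
      then have "G n \<subseteq> G (Suc ((k'-1)*N + (i'-1)))" by (rule Ganti)
      ultimately show ?thesis by (rule sm_subset)
    qed
    have binv: "\<Phi> k' i' Y' = \<Phi> k' i' Y"
      if "1 \<le> k'" "1 \<le> i'" "i' \<le> N" "k' < k \<or> (k' = k \<and> i' < i)" "Y \<in> G n" "\<forall>s. ord s < k' \<longrightarrow> Y$s = Y'$s" for k' i' Y Y'
    proof -
      note b = before[OF that(1-4)]
      have "Suc ((k'-1)*N + (i'-1)) \<le> n" using b[THEN conjunct1] by (rule Suc_leI)
      then have "G n \<subseteq> G (Suc ((k'-1)*N + (i'-1)))" by (rule Ganti)
      then have "Y \<in> G (Suc ((k'-1)*N + (i'-1)))" using that(5) by blast
      moreover have e1: "kk ((k'-1)*N + (i'-1)) = k'" and e2: "ii ((k'-1)*N + (i'-1)) = i'" using b by auto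
      moreover have "\<forall>s. ord s < kk ((k'-1)*N + (i'-1)) \<longrightarrow> Y$s = Y'$s" unfolding e1 by (rule that(6))
      ultimately have "\<Phi> (kk ((k'-1)*N + (i'-1))) (ii ((k'-1)*N + (i'-1))) Y' = \<Phi> (kk ((k'-1)*N + (i'-1))) (ii ((k'-1)*N + (i'-1))) Y"
        using IHd[OF b[THEN conjunct1]] by blast
      then show ?thesis unfolding e1 e2 .
    qed
    have Gno: "open (G n)" using IHa by simp
    have new: "open (G (Suc n)) \<and>
       (\<forall>Y\<in>G (Suc n). \<forall>Y'. (\<forall>s. ord s * N < Suc n \<longrightarrow> Y$s = Y'$s) \<longrightarrow> Y' \<in> G (Suc n)) \<and>
       smooth_on (G (Suc n)) (\<Phi> k i) \<and>
       (\<forall>Y\<in>G (Suc n). \<forall>Y'. (\<forall>s. ord s < k \<longrightarrow> Y$s = Y'$s) \<longrightarrow> \<Phi> k i Y' = \<Phi> k i Y)"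
    proof (cases "k = 1")
      case True
      have GS: "G (Suc n) = G n" using GSuc[of n] True by (auto simp: C_def k_def)
      have e: "\<Phi> 1 i = (\<lambda>Y. blk sub i (Y $ the_inv ord 0))" using Phi1 ir by auto
      have bl: "bounded_linear (\<lambda>Y::real^'d^'t. blk sub i (Y $ the_inv ord 0))"
        by (rule bounded_linear_compose[OF blk_linear bounded_linear_vec_nth])
      have o0: "ord (the_inv ord 0) = 0" using ord_inv[OF ord, of 0] by simp
      show ?thesis
      proof (intro conjI ballI allI impI)
        show "open (G (Suc n))" using GS Gno by simp
        fix Y Y' assume Y: "Y \<in> G (Suc n)"
        { assume "\<forall>s. ord s * N < Suc n \<longrightarrow> Y$s = Y'$s"
          then have "\<forall>s. ord s * N < n \<longrightarrow> Y$s = Y'$s" by auto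
          then show "Y' \<in> G (Suc n)" using IHb[of n Y Y'] Y GS by simp }
        { assume "\<forall>s. ord s < k \<longrightarrow> Y$s = Y'$s"
          then show "\<Phi> k i Y' = \<Phi> k i Y" using True e o0 by simp }
      next
        show "smooth_on (G (Suc n)) (\<Phi> k i)" using True e sm_blin[OF bl] by simp
      qed
    next
      case False
      then have k2: "2 \<le> k" using kr by simp
      have k1: "k - 1 \<in> {1..r}" "Suc (k - 1) = k" using Dsuppl[OF k2 kr(2)] by auto
      have iN: "i \<in> {1..N}" using ir by simp
      have DSo: "open (DS (k-1) i)" and Dbsm: "smooth_on (DS (k-1) i) (Db (k-1) i)"
        and DSin: "\<forall>(x, u)\<in>X. lowtri sub lay i (k-1) x \<in> DS (k-1) i"
        using Db_smooth k1(1) iN by blast+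
      have HSo: "open (HS (k-1) i)" and hsm: "smooth_on (HS (k-1) i) (h (k-1) i)"
        using h_smooth k1(1) iN by blast+
      have Asm: "smooth_on (G n) (A k i)"
      proof (rule sm_cart2[OF Gno])
        fix l d
        show "smooth_on (G n) (\<lambda>Y. A k i Y $ l $ d)"
        proof (cases "sub d = i \<and> lay l \<le> k - 1")
          case True
          then have "(\<lambda>Y. A k i Y $ l $ d) = (\<lambda>Y. \<Phi> (lay l) (sub d) Y $ d)" by (intro ext) (auto simp: Acomp)
          moreover have "smooth_on (G n) (\<Phi> (lay l) (sub d))"
            using True layr[of l] subN[of d] k2 by (intro bsm) auto
          ultimately show ?thesis using sm_linear_comp[OF Gno bounded_linear_vec_nth] by simp
        next
          case False
          then have "(\<lambda>Y. A k i Y $ l $ d) = (\<lambda>Y. 0)" by (intro ext) (auto simp: Acomp)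
          then show ?thesis using sm_const by simp
        qed
      qed
      have Bsm: "smooth_on (G n) (B k i)"
      proof (rule sm_cart2[OF Gno])
        fix l d
        show "smooth_on (G n) (\<lambda>Y. B k i Y $ l $ d)"
        proof (cases "lay l \<le> k - 1 \<or> (lay l = Suc (k - 1) \<and> sub d < i)")
          case True
          then have "(\<lambda>Y. B k i Y $ l $ d) = (\<lambda>Y. \<Phi> (lay l) (sub d) Y $ d)" by (intro ext) (auto simp: Bcomp)
          moreover have "smooth_on (G n) (\<Phi> (lay l) (sub d))"
            using True layr[of l] subN[of d] k2 k1 by (intro bsm) auto
          ultimately show ?thesis using sm_linear_comp[OF Gno bounded_linear_vec_nth] by simp
        next
          case False
          then have "(\<lambda>Y. B k i Y $ l $ d) = (\<lambda>Y. 0)" by (intro ext) (auto simp: Bcomp)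
          then show ?thesis using sm_const by simp
        qed
      qed
      have Dsm: "smooth_on (G n) (Dp k i)"
      proof -
        have "smooth_on (G n) (\<Phi> (k-1) i)" using k2 ir by (intro bsm) auto
        from sm_deriv_apply[OF Gno this sm_blin[OF tshift_linear]]
        show ?thesis by (simp add: Dp_def)
      qed
      define G1 where "G1 = G n \<inter> B k i -` DS (k-1) i"
      have G1o: "open G1" unfolding G1_def by (rule continuous_open_preimage[OF sm_cont[OF Bsm] Gno DSo])
      have G1n: "G1 \<subseteq> G n" by (auto simp: G1_def)
      have Wsm: "smooth_on G1 (W k i)"
      proof -
        have "smooth_on G1 (\<lambda>Y. Db (k-1) i (B k i Y))"
          by (rule sm_compose[OF G1o DSo _ Dbsm sm_subset[OF Bsm G1n]]) (auto simp: G1_def)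
        from sm_diff[OF G1o sm_subset[OF Dsm G1n] this]
        have "smooth_on G1 (\<lambda>Y. Dp k i Y - Db (k - 1) i (B k i Y))" .
        from sm_linear_comp[OF G1o blk_linear this] show ?thesis by (simp add: W_def)
      qed
      have GSn: "G (Suc n) = G1 \<inter> (\<lambda>Y. (A k i Y, W k i Y)) -` HS (k-1) i"
        using GSuc[of n] k2 by (auto simp: G1_def C_def k_def i_def)
      have AWsm: "smooth_on G1 (\<lambda>Y. (A k i Y, W k i Y))"
        by (rule sm_pair[OF G1o sm_subset[OF Asm G1n] Wsm])
      have GSo: "open (G (Suc n))" unfolding GSn
        by (rule continuous_open_preimage[OF sm_cont[OF AWsm] G1o HSo])
      have GSG1: "G (Suc n) \<subseteq> G1" using GSn by auto
      have Phism: "smooth_on (G (Suc n)) (\<Phi> k i)"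
      proof -
        have "smooth_on (G (Suc n)) (\<lambda>Y. h (k-1) i (A k i Y, W k i Y))"
          by (rule sm_compose[OF GSo HSo _ hsm sm_subset[OF AWsm GSG1]]) (auto simp: GSn)
        from sm_linear_comp[OF GSo blk_linear this]
        have "smooth_on (G (Suc n)) (\<lambda>Y. blk sub i (h (k-1) i (A k i Y, W k i Y)))" .
        then show ?thesis
          by (rule sm_cong[OF GSo]) (use Phi_eq[of k i] k2 kr iN in auto)
      qed
      define m0 where "m0 = (k-1-1)*N + (i-1)"
      have m0b: "m0 < n \<and> kk m0 = k-1 \<and> ii m0 = i"
        unfolding m0_def using before[of "k-1" i] k2 ir by auto
      have "(k-1-1)*N + (i-1) < (k-1)*N + (1-1)"
        by (rule idx_lt[OF N0 ir(2) _ ir(1)]) (use k2 in auto)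
      then have m0U: "Suc m0 \<le> (k-1)*N" by (simp add: m0_def)
      define U where "U = G ((k-1)*N)"
      have Uo: "open U" unfolding U_def using IHa npos by simp
      have GnU: "G n \<subseteq> U" unfolding U_def using Ganti npos by simp
      have UG: "U \<subseteq> G (Suc m0)" unfolding U_def using Ganti m0U by simp
      have sm0: "smooth_on (G (Suc m0)) (\<Phi> (k-1) i)" using IHc[of m0] m0b by simp
      have inv0: "\<Phi> (k-1) i Y' = \<Phi> (k-1) i Y" if "Y \<in> G (Suc m0)" "\<forall>s. ord s < k - 1 \<longrightarrow> Y$s = Y'$s" for Y Y'
        using IHd[of m0 Y Y'] m0b that by simp
      have AWB: "A k i Y' = A k i Y \<and> B k i Y' = B k i Y \<and> W k i Y' = W k i Y"
        if Y: "Y \<in> G n" and Y': "Y' \<in> G n" and ag: "\<forall>s. ord s < k \<longrightarrow> Y$s = Y'$s" for Y Y'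
      proof -
        have eA: "A k i Y' = A k i Y"
        proof (subst vec_eq_iff, intro allI, subst vec_eq_iff, intro allI)
          fix l d
          show "A k i Y' $ l $ d = A k i Y $ l $ d"
          proof (cases "sub d = i \<and> lay l \<le> k - 1")
            case True
            have "\<Phi> (lay l) (sub d) Y' = \<Phi> (lay l) (sub d) Y"
              using True layr[of l] subN[of d] k2 Y ag by (intro binv) auto
            then show ?thesis using True by (auto simp: Acomp)
          next
            case False
            then show ?thesis by (auto simp: Acomp)
          qed
        qed
        have eB: "B k i Y' = B k i Y"
        proof (subst vec_eq_iff, intro allI, subst vec_eq_iff, intro allI)
          fix l d
          show "B k i Y' $ l $ d = B k i Y $ l $ d"
          proof (cases "lay l \<le> k - 1 \<or> (lay l = Suc (k - 1) \<and> sub d < i)")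
            case True
            have "\<Phi> (lay l) (sub d) Y' = \<Phi> (lay l) (sub d) Y"
              using True layr[of l] subN[of d] k2 k1 Y ag by (intro binv) auto
            then show ?thesis using True by (auto simp: Bcomp)
          next
            case False
            then show ?thesis by (auto simp: Bcomp)
          qed
        qed
        have ag1: "\<forall>s. ord s < k - 1 \<longrightarrow> Y$s = Y'$s" using ag by auto
        have YU: "Y \<in> U" using Y GnU by auto
        have fd: "frechet_derivative (\<Phi> (k-1) i) (at Y') = frechet_derivative (\<Phi> (k-1) i) (at Y)"
        proof (rule deriv_inv1[OF Uo _ _ YU ag1])
          fix Z assume "Z \<in> U" then show "\<Phi> (k-1) i differentiable at Z"
            using sm_diffble[OF sm0] UG by auto
        next
          fix Z Z' assume Z: "Z \<in> U" and agz: "\<forall>s. ord s < k - 1 \<longrightarrow> Z$s = Z'$s"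
          have "\<forall>s. ord s * N < (k-1)*N \<longrightarrow> Z$s = Z'$s" using agz cyl_arith2[OF N0] by auto
          then have "Z' \<in> U" using IHb[of "(k-1)*N" Z Z'] Z npos by (simp add: U_def)
          moreover have "\<Phi> (k-1) i Z' = \<Phi> (k-1) i Z" using inv0 Z UG agz by auto
          ultimately show "Z' \<in> U \<and> \<Phi> (k-1) i Z' = \<Phi> (k-1) i Z" by simp
        qed
        have fv: "frechet_derivative (\<Phi> (k-1) i) (at Y) (tshift ord r Y') = frechet_derivative (\<Phi> (k-1) i) (at Y) (tshift ord r Y)"
        proof (rule deriv_inv2[where P="\<lambda>s. ord s < k - 1"])
          show "\<Phi> (k-1) i differentiable at Y" using sm_diffble[OF sm0] UG YU by auto
          show "\<And>Y''. \<forall>s. ord s < k - 1 \<longrightarrow> Y $ s = Y'' $ s \<Longrightarrow> \<Phi> (k - 1) i Y'' = \<Phi> (k - 1) i Y"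
            using inv0 UG YU by auto
          show "\<forall>s. ord s < k - 1 \<longrightarrow> tshift ord r Y' $ s = tshift ord r Y $ s"
            by (rule tshift_agree[OF ag])
        qed
        have "Dp k i Y' = Dp k i Y" using fd fv by (simp add: Dp_def)
        then have eW: "W k i Y' = W k i Y" using eB by (simp add: W_def)
        show ?thesis using eA eB eW by simp
      qed
      have SucN: "Suc n = (k-1)*N + i" using npos ir by simp
      show ?thesis
      proof (intro conjI ballI allI impI)
        show "open (G (Suc n))" by (rule GSo)
        show "smooth_on (G (Suc n)) (\<Phi> k i)" by (rule Phism)
        fix Y Y' assume Y: "Y \<in> G (Suc n)"
        then have Yn: "Y \<in> G n" using GSuc by auto
        have CY: "C n Y" using Y GSuc by auto
        { assume ag: "\<forall>s. ord s * N < Suc n \<longrightarrow> Y$s = Y'$s"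
          have agk: "\<forall>s. ord s < k \<longrightarrow> Y$s = Y'$s" using ag cyl_arith[OF N0 ir kr(1)] SucN by auto
          have "\<forall>s. ord s * N < n \<longrightarrow> Y$s = Y'$s" using ag by auto
          then have Y'n: "Y' \<in> G n" using IHb[of n Y Y'] Yn by simp
          have "C n Y'" using CY AWB[OF Yn Y'n agk] by (simp add: C_def k_def i_def)
          then show "Y' \<in> G (Suc n)" using Y'n GSuc by auto }
        { assume agk: "\<forall>s. ord s < k \<longrightarrow> Y$s = Y'$s"
          have "\<forall>s. ord s * N < n \<longrightarrow> Y$s = Y'$s"
          proof (intro allI impI)
            fix s assume "ord s * N < n"
            then have "ord s * N < (k-1)*N + i" using SucN by linarith
            then have "ord s < k" using cyl_arith[OF N0 ir kr(1)] by simp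
            then show "Y$s = Y'$s" using agk by simp
          qed
          then have Y'n: "Y' \<in> G n" using IHb[of n Y Y'] Yn by simp
          from AWB[OF Yn Y'n agk] show "\<Phi> k i Y' = \<Phi> k i Y"
            using Phi_eq[of k i] k2 kr iN by simp }
      qed
    qed
    have new1: "open (G (Suc n))" using new by blast
    have new2: "\<And>Y Y'. Y\<in>G (Suc n) \<Longrightarrow> (\<forall>s. ord s * N < Suc n \<longrightarrow> Y$s = Y'$s) \<Longrightarrow> Y' \<in> G (Suc n)"
      using new by blast
    have new3: "smooth_on (G (Suc n)) (\<Phi> (kk n) (ii n))" using new by (simp add: k_def i_def)
    have new4: "\<And>Y Y'. Y\<in>G (Suc n) \<Longrightarrow> (\<forall>s. ord s < kk n \<longrightarrow> Y$s = Y'$s) \<Longrightarrow> \<Phi> (kk n) (ii n) Y' = \<Phi> (kk n) (ii n) Y"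
      using new unfolding k_def i_def by blast
    show ?case
    proof (intro conjI allI impI ballI)
      fix n' assume h: "n' \<le> Suc n"
      show "open (G n')"
      proof (cases "n' = Suc n")
        case True then show ?thesis using new1 by simp
      next
        case False then show ?thesis using h IHa by simp
      qed
    next
      fix n' Y Y' assume h: "n' \<le> Suc n" "Y \<in> G n'" "\<forall>s. ord s * N < n' \<longrightarrow> Y $ s = Y' $ s"
      show "Y' \<in> G n'"
      proof (cases "n' = Suc n")
        case True then show ?thesis using new2 h by blast
      next
        case False then have "n' \<le> n" using h(1) by simp
        then show ?thesis using IHb h(2,3) by blast
      qed
    next
      fix m assume h: "m < Suc n"
      show "smooth_on (G (Suc m)) (\<Phi> (kk m) (ii m))"
      proof (cases "m = n")
        case True then show ?thesis using new3 by simp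
      next
        case False then have "m < n" using h by simp
        then show ?thesis by (rule IHc)
      qed
    next
      fix m Y Y' assume h: "m < Suc n" "Y \<in> G (Suc m)" "\<forall>s. ord s < kk m \<longrightarrow> Y $ s = Y' $ s"
      show "\<Phi> (kk m) (ii m) Y' = \<Phi> (kk m) (ii m) Y"
      proof (cases "m = n")
        case True then show ?thesis using new4 h(2,3) by blast
      next
        case False then have "m < n" using h by simp
        then show ?thesis using IHd h(2,3) by blast
      qed
    qed
  qed
  have SMM: "(\<forall>n'\<le>M. open (G n')) \<and>
     (\<forall>n'\<le>M. \<forall>Y\<in>G n'. \<forall>Y'. (\<forall>s. ord s * N < n' \<longrightarrow> Y$s = Y'$s) \<longrightarrow> Y' \<in> G n') \<and>
     (\<forall>m<M. smooth_on (G (Suc m)) (\<Phi> (kk m) (ii m))) \<and>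
     (\<forall>m<M. \<forall>Y\<in>G (Suc m). \<forall>Y'. (\<forall>s. ord s < kk m \<longrightarrow> Y$s = Y'$s) \<longrightarrow> \<Phi> (kk m) (ii m) Y' = \<Phi> (kk m) (ii m) Y)"
    by (rule SM) simp
  have SMa: "open (G M)" using SMM by blast
  have SMc: "\<And>m. m < M \<Longrightarrow> smooth_on (G (Suc m)) (\<Phi> (kk m) (ii m))" using SMM by blast
  have SMd: "\<And>m Y Y'. m < M \<Longrightarrow> Y\<in>G (Suc m) \<Longrightarrow> (\<forall>s. ord s < kk m \<longrightarrow> Y$s = Y'$s) \<Longrightarrow> \<Phi> (kk m) (ii m) Y' = \<Phi> (kk m) (ii m) Y"
    using SMM by blast
  have posM: "(k-1)*N + (i-1) < M" if "1 \<le> k" "k \<le> Suc r" "1 \<le> i" "i \<le> N" for k i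
  proof -
    have "(k-1)*N + (i-1) < (Suc (Suc r) - 1)*N + (1 - 1)"
      by (rule idx_lt[OF N0 that(4) _ that(3) that(1)]) (use that in auto)
    then show ?thesis by (simp add: M_def)
  qed
  show ?thesis
  proof (rule exI[of _ "G M"], intro conjI)
    show "open (G M)" by (rule SMa)
    show "\<forall>k\<in>{1..Suc r}. \<forall>i\<in>{1..N}. smooth_on (G M) (\<Phi> k i)"
    proof (intro ballI)
      fix k i assume k: "k \<in> {1..Suc r}" and i: "i \<in> {1..N}"
      define m where "m = (k-1)*N + (i-1)"
      have mM: "m < M" using posM k i by (simp add: m_def)
      have e1: "kk m = k" and e2: "ii m = i" using kk_pos ii_pos k i by (auto simp: m_def)
      have "smooth_on (G (Suc m)) (\<Phi> k i)" using SMc[OF mM] e1 e2 by simp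
      moreover have "G M \<subseteq> G (Suc m)" using mM by (intro Ganti) simp
      ultimately show "smooth_on (G M) (\<Phi> k i)" by (rule sm_subset)
    qed
    show "\<forall>(T :: real set) (xt :: real \<Rightarrow> real^'d^'l) (ut :: real \<Rightarrow> real^'d) (Ys :: nat \<Rightarrow> real \<Rightarrow> real^'d).
        open T
        \<and> (\<forall>t\<in>T. (xt t, ut t) \<in> X \<and>
              (xt has_vector_derivative (Fj sub lay r fb fr (xt t) (ut t) + \<Delta> (xt t))) (at t))
        \<and> (\<forall>t\<in>T. Ys 0 t = xt t $ layer lay 1)
        \<and> (\<forall>s<r. \<forall>t\<in>T. (Ys s has_vector_derivative Ys (Suc s) t) (at t))
        \<longrightarrow> (\<forall>t\<in>T. tower ord Ys t \<in> G M \<and>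
              (\<forall>i\<in>{1..N}. (\<forall>k\<in>{1..r}. blk sub i (xt t $ layer lay k) = \<Phi> k i (tower ord Ys t))
                         \<and> blk sub i (ut t) = \<Phi> (Suc r) i (tower ord Ys t)))"
    proof (intro allI impI)
      fix T :: "real set" and xt :: "real \<Rightarrow> real^'d^'l" and ut :: "real \<Rightarrow> real^'d" and Ys :: "nat \<Rightarrow> real \<Rightarrow> real^'d"
      assume H: "open T
        \<and> (\<forall>t\<in>T. (xt t, ut t) \<in> X \<and>
              (xt has_vector_derivative (Fj sub lay r fb fr (xt t) (ut t) + \<Delta> (xt t))) (at t))
        \<and> (\<forall>t\<in>T. Ys 0 t = xt t $ layer lay 1)
        \<and> (\<forall>s<r. \<forall>t\<in>T. (Ys s has_vector_derivative Ys (Suc s) t) (at t))"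
      have To: "open T" using H by blast
      have inX: "\<And>t. t \<in> T \<Longrightarrow> (xt t, ut t) \<in> X" using H by blast
      have xd: "\<And>t. t \<in> T \<Longrightarrow> (xt has_vector_derivative (Fj sub lay r fb fr (xt t) (ut t) + \<Delta> (xt t))) (at t)"
        using H by blast
      have Y0: "\<And>t. t \<in> T \<Longrightarrow> Ys 0 t = xt t $ layer lay 1" using H by blast
      have Yd: "\<forall>s<r. \<forall>t\<in>T. (Ys s has_vector_derivative Ys (Suc s) t) (at t)" using H by blast
      define tgt where "tgt = (\<lambda>k i t. if k \<le> r then blk sub i (xt t $ layer lay k) else blk sub i (ut t))"
      have TR: "\<forall>t\<in>T. tower ord Ys t \<in> G n \<and> (\<forall>m<n. \<Phi> (kk m) (ii m) (tower ord Ys t) = tgt (kk m) (ii m) t)"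
        if "n \<le> M" for n
        using that
      proof (induction n)
        case 0
        then show ?case by (simp add: G0)
      next
        case (Suc n)
        have nM: "n < M" using Suc.prems by simp
        have IH: "\<forall>t\<in>T. tower ord Ys t \<in> G n \<and> (\<forall>m<n. \<Phi> (kk m) (ii m) (tower ord Ys t) = tgt (kk m) (ii m) t)"
          using Suc.IH nM by simp
        have IHG: "\<And>t. t \<in> T \<Longrightarrow> tower ord Ys t \<in> G n" using IH by blast
        have IHv: "\<And>t m. t \<in> T \<Longrightarrow> m < n \<Longrightarrow> \<Phi> (kk m) (ii m) (tower ord Ys t) = tgt (kk m) (ii m) t"
          using IH by blast
        define k where "k = kk n"
        define i where "i = ii n"
        have kr: "1 \<le> k" "k \<le> Suc r" using kk_range[OF nM] by (auto simp: k_def)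
        have ir: "1 \<le> i" "i \<le> N" using ii_range by (auto simp: i_def)
        have iN: "i \<in> {1..N}" using ir by simp
        have npos: "n = (k-1)*N + (i-1)" using pos_kk[of n] by (simp add: k_def i_def)
        have before: "(k'-1)*N + (i'-1) < n \<and> kk ((k'-1)*N + (i'-1)) = k' \<and> ii ((k'-1)*N + (i'-1)) = i'"
          if "1 \<le> k'" "1 \<le> i'" "i' \<le> N" "k' < k \<or> (k' = k \<and> i' < i)" for k' i'
          using idx_lt[OF N0 that(3) ir(1) that(2) that(1) that(4)] npos kk_pos[OF that(2,3,1)] ii_pos[OF that(2,3)] by simp
        have bval: "\<Phi> k' i' (tower ord Ys t) = tgt k' i' t"
          if "1 \<le> k'" "1 \<le> i'" "i' \<le> N" "k' < k \<or> (k' = k \<and> i' < i)" "t \<in> T" for k' i' t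
        proof -
          note b = before[OF that(1-4)]
          have e1: "kk ((k'-1)*N + (i'-1)) = k'" and e2: "ii ((k'-1)*N + (i'-1)) = i'" using b by auto
          have "\<Phi> (kk ((k'-1)*N + (i'-1))) (ii ((k'-1)*N + (i'-1))) (tower ord Ys t) = tgt (kk ((k'-1)*N + (i'-1))) (ii ((k'-1)*N + (i'-1))) t"
            using IHv[OF that(5) b[THEN conjunct1]] .
          then show ?thesis unfolding e1 e2 .
        qed
        have new: "tower ord Ys t \<in> G (Suc n) \<and> \<Phi> k i (tower ord Ys t) = tgt k i t" if t: "t \<in> T" for t
        proof (cases "k = 1")
          case True
          have GS: "G (Suc n) = G n" using GSuc[of n] True by (auto simp: C_def k_def)
          have o0: "ord (the_inv ord 0) = 0" using ord_inv[OF ord, of 0] by simp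
          have "\<Phi> 1 i (tower ord Ys t) = blk sub i (Ys 0 t)" using Phi1[OF iN] o0 by (simp add: tower_def)
          also have "\<dots> = tgt 1 i t" using Y0[OF t] r1 by (simp add: tgt_def)
          finally show ?thesis using True GS IHG[OF t] by simp
        next
          case False
          then have k2: "2 \<le> k" using kr by simp
          have k1: "k - 1 \<in> {1..r}" "Suc (k - 1) = k" using Dsuppl[OF k2 kr(2)] by auto
          define x where "x = xt t"
          define u where "u = ut t"
          have xu: "(x, u) \<in> X" using inX[OF t] by (simp add: x_def u_def)
          have sv: "\<Phi> (lay l) (sub d) (tower ord Ys t) $ d = x $ l $ d"
            if "lay l \<le> k - 1 \<or> (lay l = k \<and> sub d < i)" for l d
          proof -
            have "\<Phi> (lay l) (sub d) (tower ord Ys t) = tgt (lay l) (sub d) t"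
              using that layr[of l] subN[of d] k2 t by (intro bval) auto
            also have "\<dots> = blk sub (sub d) (x $ l)"
              using layr[of l] layer_lay[OF lay] by (simp add: tgt_def x_def)
            finally show ?thesis by (simp add: blk_nth)
          qed
          have hA: "A k i (tower ord Ys t) = bmask sub lay i (k-1) x"
          proof (subst vec_eq_iff, intro allI, subst vec_eq_iff, intro allI)
            fix l d
            show "A k i (tower ord Ys t) $ l $ d = bmask sub lay i (k-1) x $ l $ d"
            proof (cases "sub d = i \<and> lay l \<le> k - 1")
              case True
              have "\<Phi> (lay l) (sub d) (tower ord Ys t) $ d = x $ l $ d" using True by (intro sv) simp
              then show ?thesis using True by (auto simp: Acomp bmask_def)
            next
              case False
              then show ?thesis by (auto simp: Acomp bmask_def)
            qed
          qed
          have hB: "B k i (tower ord Ys t) = lowtri sub lay i (k-1) x"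
          proof (subst vec_eq_iff, intro allI, subst vec_eq_iff, intro allI)
            fix l d
            show "B k i (tower ord Ys t) $ l $ d = lowtri sub lay i (k-1) x $ l $ d"
            proof (cases "lay l \<le> k - 1 \<or> (lay l = Suc (k - 1) \<and> sub d < i)")
              case True
              have "\<Phi> (lay l) (sub d) (tower ord Ys t) $ d = x $ l $ d" using True k1 by (intro sv) auto
              then show ?thesis using True by (auto simp: Bcomp lowtri_def)
            next
              case False
              then show ?thesis by (auto simp: Bcomp lowtri_def)
            qed
          qed
          define m0 where "m0 = (k-1-1)*N + (i-1)"
          have m0b: "m0 < n \<and> kk m0 = k-1 \<and> ii m0 = i"
            unfolding m0_def using before[of "k-1" i] k2 ir by auto
          have m0M: "m0 < M" using m0b nM by simp
          have sm0: "smooth_on (G (Suc m0)) (\<Phi> (k-1) i)" using SMc[OF m0M] m0b by simp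
          have Gm0: "\<And>t'. t' \<in> T \<Longrightarrow> tower ord Ys t' \<in> G (Suc m0)"
          proof -
            fix t' assume "t' \<in> T"
            moreover have "G n \<subseteq> G (Suc m0)" using m0b by (intro Ganti) simp
            ultimately show "tower ord Ys t' \<in> G (Suc m0)" using IHG by blast
          qed
          define L where "L = layer lay (k-1)"
          have blL: "bounded_linear (\<lambda>v::real^'d^'l. blk sub i (v $ L))"
            by (rule bounded_linear_compose[OF blk_linear bounded_linear_vec_nth])
          have hD: "Dp k i (tower ord Ys t) = blk sub i ((Fj sub lay r fb fr x u + \<Delta> x) $ L)"
            unfolding Dp_def
          proof (rule traj_deriv[OF ord To t, where q="\<lambda>t'. blk sub i (xt t' $ L)"])
            show "\<Phi> (k - 1) i differentiable at (tower ord Ys t)"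
              using sm_diffble[OF sm0 Gm0[OF t]] .
            show "\<Phi> (k - 1) i Y' = \<Phi> (k - 1) i (tower ord Ys t')"
              if "t' \<in> T" "\<forall>s. ord s < r \<longrightarrow> tower ord Ys t' $ s = Y' $ s" for t' Y'
            proof -
              have "\<forall>s. ord s < kk m0 \<longrightarrow> tower ord Ys t' $ s = Y' $ s" using that(2) m0b k1 by auto
              from SMd[OF m0M Gm0[OF that(1)] this] show ?thesis using m0b by simp
            qed
            show "\<Phi> (k - 1) i (tower ord Ys t') = blk sub i (xt t' $ L)" if "t' \<in> T" for t'
            proof -
              have "\<Phi> (k - 1) i (tower ord Ys t') = tgt (k-1) i t'" using k2 ir that by (intro bval) auto
              then show ?thesis using k1 by (simp add: tgt_def L_def)
            qed
            show "((\<lambda>t'. blk sub i (xt t' $ L)) has_vector_derivative blk sub i ((Fj sub lay r fb fr x u + \<Delta> x) $ L)) (at t)"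
              using bounded_linear.has_vector_derivative[OF blL xd[OF t]] by (simp add: x_def u_def)
            show "\<forall>s<r. \<forall>t\<in>T. (Ys s has_vector_derivative Ys (Suc s) t) (at t)" by (rule Yd)
          qed
          define F' where "F' = (if k - 1 < r then fb (k-1) i (bmask sub lay i (Suc (k-1)) x)
                         else fr i (bmask sub lay i r x, blk sub i u))"
          have hFj: "blk sub i (Fj sub lay r fb fr x u $ L) = blk sub i F'"
          proof -
            have lL: "lay L = k - 1" using lay_layer[OF lay] k1 by (simp add: L_def)
            show ?thesis by (simp add: vec_eq_iff blk_nth Fj_def lL F'_def)
          qed
          have hDelta: "blk sub i (\<Delta> x $ L) = blk sub i (Db (k-1) i (lowtri sub lay i (k-1) x))"
            using lower_tri xu iN k1 by (auto simp: L_def)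
          have hW: "W k i (tower ord Ys t) = blk sub i F'"
            unfolding W_def hD hB
            by (simp add: blk_add blk_diff blk_blk hFj hDelta)
          have CB: "B k i (tower ord Ys t) \<in> DS (k-1) i" using hB Db_smooth k1 iN xu by fastforce
          have CA: "(A k i (tower ord Ys t), W k i (tower ord Ys t)) \<in> HS (k-1) i"
            using hA hW h_smooth k1 iN xu unfolding F'_def by fastforce
          have "C n (tower ord Ys t)" using CA CB by (simp add: C_def k_def i_def)
          then have inG: "tower ord Ys t \<in> G (Suc n)" using GSuc IHG[OF t] by simp
          have "\<Phi> k i (tower ord Ys t) = blk sub i (h (k-1) i (bmask sub lay i (k-1) x, blk sub i F'))"
            using Phi_eq[of k i] k2 kr iN hA hW by simp
          also have "\<dots> = tgt k i t"
          proof (cases "k - 1 < r")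
            case True
            have hi0: "\<forall>i\<in>{1..N}. \<forall>k\<in>{1..<r}.
              blk sub i (h k i (bmask sub lay i k x, blk sub i (fb k i (bmask sub lay i (Suc k) x))))
                = blk sub i (x $ layer lay (Suc k))"
              using bspec[OF h_inv xu] by simp
            have km: "k - 1 \<in> {1..<r}" using True k1 by simp
            have hi: "blk sub i (h (k-1) i (bmask sub lay i (k-1) x, blk sub i (fb (k-1) i (bmask sub lay i (Suc (k-1)) x))))
                = blk sub i (x $ layer lay (Suc (k-1)))"
              using bspec[OF bspec[OF hi0 iN] km] .
            have "F' = fb (k-1) i (bmask sub lay i (Suc (k-1)) x)" using True by (simp add: F'_def)
            then have "blk sub i (h (k-1) i (bmask sub lay i (k-1) x, blk sub i F')) = blk sub i (x $ layer lay k)"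
              using hi k1 by simp
            moreover have "k \<le> r" using True k1 by simp
            ultimately show ?thesis by (simp add: tgt_def x_def)
          next
            case False
            then have kr': "k - 1 = r" using k1 by simp
            have hr0: "\<forall>i\<in>{1..N}.
              blk sub i (h r i (bmask sub lay i r x, blk sub i (fr i (bmask sub lay i r x, blk sub i u))))
                = blk sub i u"
              using bspec[OF h_inv_r xu] by simp
            have hr: "blk sub i (h r i (bmask sub lay i r x, blk sub i (fr i (bmask sub lay i r x, blk sub i u))))
                = blk sub i u" using bspec[OF hr0 iN] .
            have "F' = fr i (bmask sub lay i r x, blk sub i u)" using False by (simp add: F'_def)
            then have "blk sub i (h (k-1) i (bmask sub lay i (k-1) x, blk sub i F')) = blk sub i u"
              using hr kr' by simp
            moreover have "\<not> k \<le> r" using kr' k2 by simp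
            ultimately show ?thesis by (simp add: tgt_def u_def)
          qed
          finally show ?thesis using inG by simp
        qed
        show ?case
        proof (intro ballI conjI allI impI)
          fix t assume t: "t \<in> T"
          show "tower ord Ys t \<in> G (Suc n)" using new[OF t] by simp
          fix m assume m: "m < Suc n"
          show "\<Phi> (kk m) (ii m) (tower ord Ys t) = tgt (kk m) (ii m) t"
          proof (cases "m = n")
            case True then show ?thesis using new[OF t] by (simp add: k_def i_def)
          next
            case False then have "m < n" using m by simp
            then show ?thesis using IHv[OF t] by simp
          qed
        qed
      qed
      have TRM: "\<forall>t\<in>T. tower ord Ys t \<in> G M \<and> (\<forall>m<M. \<Phi> (kk m) (ii m) (tower ord Ys t) = tgt (kk m) (ii m) t)"
        by (rule TR) simp
      have val: "\<Phi> k i (tower ord Ys t) = tgt k i t"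
        if "t \<in> T" "1 \<le> k" "k \<le> Suc r" "i \<in> {1..N}" for t k i
      proof -
        define m where "m = (k-1)*N + (i-1)"
        have mM: "m < M" using posM that by (simp add: m_def)
        have e1: "kk m = k" and e2: "ii m = i" using kk_pos ii_pos that by (auto simp: m_def)
        have "\<Phi> (kk m) (ii m) (tower ord Ys t) = tgt (kk m) (ii m) t" using TRM that(1) mM by blast
        then show ?thesis unfolding e1 e2 .
      qed
      show "\<forall>t\<in>T. tower ord Ys t \<in> G M \<and>
              (\<forall>i\<in>{1..N}. (\<forall>k\<in>{1..r}. blk sub i (xt t $ layer lay k) = \<Phi> k i (tower ord Ys t))
                         \<and> blk sub i (ut t) = \<Phi> (Suc r) i (tower ord Ys t))"
      proof (rule ballI)
        fix t assume t: "t \<in> T"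
        show "tower ord Ys t \<in> G M \<and>
              (\<forall>i\<in>{1..N}. (\<forall>k\<in>{1..r}. blk sub i (xt t $ layer lay k) = \<Phi> k i (tower ord Ys t))
                         \<and> blk sub i (ut t) = \<Phi> (Suc r) i (tower ord Ys t))"
        proof (intro conjI ballI)
          show "tower ord Ys t \<in> G M" using TRM t by blast
        next
          fix i k assume i: "i \<in> {1..N}" and k: "k \<in> {1..r}"
          show "blk sub i (xt t $ layer lay k) = \<Phi> k i (tower ord Ys t)"
            using val[OF t _ _ i, of k] k by (simp add: tgt_def)
        next
          fix i assume i: "i \<in> {1..N}"
          show "blk sub i (ut t) = \<Phi> (Suc r) i (tower ord Ys t)"
            using val[OF t _ _ i, of "Suc r"] by (simp add: tgt_def)
        qed
      qed
    qed
  qed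
qed

end
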